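(* Let $C\in\mathbb R^{d\times d}$ satisfy Condition A and let $L f=-\mathrm{div}_x(C_S\nabla_xf+Cxf)$ be the Fokker–Planck operator on $\mathcal H=L^2(\mathbb R^d,f_\infty^{-1})$. Transported to the Boson Fock space $\mathcal F_s(\mathbb R^d)$ via the isometry $\Psi$, $L$ is the second quantization of $C$ (regarded as an operator on the Hilbert space $\mathbb R^d$), i.e. $\Psi L\Psi^{-1}=d\Gamma(C)$.
   Context: $C_S=\frac12(C+C^T)$; Condition A: $C_S$ positive semi-definite and no non-trivial $C^T$-invariant subspace of $\ker C_S$. $f_\infty(x)=(2\pi)^{-d/2}e^{-|x|^2/2}$, $\mathcal H$ has inner product $\int fgf_\infty^{-1}dx$. Fock space: for $H=\mathbb R^d$, let $F^{(m)}$ ($m\ge1$) be the space of symmetric $m$-tensors over $\mathbb R^d$ with the Frobenius inner product $\langle A,B\rangle_{\mathcal F}=\sum_{i_1,\dots,i_m}A_{i_1\dots i_m}B_{i_1\dots i_m}$ (this is the $m$-fold symmetric tensor product of $\mathbb R^d$), $F^{(0)}=\mathbb R$, and $\mathcal F_s(\mathbb R^d)$ the completed orthogonal direct sum $\bigoplus_{m\ge0}F^{(m)}$, i.e. sequences $\psi=(\psi^{(m)})_{m\ge0}$ with $\|\psi\|^2=\sum_m\|\psi^{(m)}\|^2_{\mathcal F}<\infty$. The second quantization $d\Gamma(C)$ is defined on finite sequences (the incomplete direct sum) by $d\Gamma(C)|_{F^{(0)}}=0$ and, on $F^{(m)}$, $d\Gamma(C)=C\otimes\mathbb 1\otimes\cdots\otimes\mathbb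 1+\cdots+\mathbb 1\otimes\cdots\otimes\mathbb 1\otimes C$, i.e. $(d\Gamma(C)A)_{i_1\dots i_m}=\sum_{r=1}^m\sum_{j=1}^dC_{i_rj}A_{i_1\dots i_{r-1}ji_{r+1}\dots i_m}$. The map $\Psi$: with $g(y)=(2\pi)^{-1/2}e^{-y^2/2}$, probabilists' Hermite polynomials $H_n$, $g_\alpha(x)=\prod_iH_{\alpha_i}(x_i)g(x_i)$ and $d_\alpha=\langle f,g_\alpha\rangle_{\mathcal H}/\|g_\alpha\|_{\mathcal H}^2$, set $\Psi f=(\widetilde D^{(m)})_{m\ge0}$ with $\widetilde D^{(0)}=\langle f,f_\infty\rangle_{\mathcal H}$ and, for $m\ge1$, $\widetilde D^{(m)}_{i_1\dots i_m}=\sqrt{m!}\,d_\alpha/\gamma_\alpha$ where $\alpha_k=\#\{r:i_r=k\}$ and $\gamma_\alpha=m!/(\alpha_1!\cdots\alpha_d!)$. $\Psi:\mathcal H\to\mathcal F_s(\mathbb R^d)$ is an isometric isomorphism. *)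

theory Defs
  imports "HOL-Analysis.Analysis"
begin

text \<open>Vectors in R^d are real^'n with d = CARD('n); matrices are real^'n^'n,
  with entry (i,j) given by C $ i $ j.\<close>

definition sym_part :: "real^'n^'n \<Rightarrow> real^'n^'n" where
  "sym_part C = (1/2) *\<^sub>R (C + transpose C)"

definition condition_A :: "real^'n^'n \<Rightarrow> bool" where
  "condition_A C \<longleftrightarrow>
     (\<forall>x. x \<bullet> (sym_part C *v x) \<ge> 0) \<and>
     (\<forall>V. subspace V \<and> V \<subseteq> {x. sym_part C *v x = 0} \<and>
          (\<forall>x\<in>V. transpose C *v x \<in> V) \<longrightarrow> V = {0})"

definition partial :: "'n::finite \<Rightarrow> (real^'n \<Rightarrow> real) \<Rightarrow> real^'n \<Rightarrow> real" where
  "partial i f x = deriv (\<lambda>t. f (x + t *\<^sub>R axis i 1)) 0"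

definition FP_op :: "real^'n^'n \<Rightarrow> (real^'n \<Rightarrow> real) \<Rightarrow> real^'n \<Rightarrow> real" where
  "FP_op C f x = - (\<Sum>i\<in>UNIV. partial i
      (\<lambda>y. (\<Sum>j\<in>UNIV. sym_part C $ i $ j * partial j f y) + (\<Sum>j\<in>UNIV. C $ i $ j * y $ j) * f y) x)"

definition f_inf :: "real^'n::finite \<Rightarrow> real" where
  "f_inf x = (2 * pi) powr (- real CARD('n) / 2) * exp (- (norm x ^ 2) / 2)"

definition H_inner :: "(real^'n::finite \<Rightarrow> real) \<Rightarrow> (real^'n \<Rightarrow> real) \<Rightarrow> real" where
  "H_inner f g = (\<integral>x. f x * g x / f_inf x \<partial>lborel)"

fun hermite :: "nat \<Rightarrow> real \<Rightarrow> real" where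
  "hermite 0 y = 1"
| "hermite (Suc 0) y = y"
| "hermite (Suc (Suc n)) y = y * hermite (Suc n) y - real (Suc n) * hermite n y"

definition gauss1 :: "real \<Rightarrow> real" where
  "gauss1 y = exp (- (y ^ 2) / 2) / sqrt (2 * pi)"

definition g_multi :: "('n::finite \<Rightarrow> nat) \<Rightarrow> real^'n \<Rightarrow> real" where
  "g_multi \<alpha> x = (\<Prod>i\<in>UNIV. hermite (\<alpha> i) (x $ i) * gauss1 (x $ i))"

text \<open>Fock space elements: psi m is the m-tensor, read on index lists of length m.\<close>
type_synonym 'n fock = "nat \<Rightarrow> 'n list \<Rightarrow> real"

definition multi_of :: "'n list \<Rightarrow> 'n \<Rightarrow> nat" where
  "multi_of xs = (\<lambda>k. count (mset xs) k)"

definition d_coeff :: "(real^'n::finite \<Rightarrow> real) \<Rightarrow> ('n \<Rightarrow> nat) \<Rightarrow> real" where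
  "d_coeff f \<alpha> = H_inner f (g_multi \<alpha>) / H_inner (g_multi \<alpha>) (g_multi \<alpha>)"

definition gamma_coeff :: "nat \<Rightarrow> ('n::finite \<Rightarrow> nat) \<Rightarrow> real" where
  "gamma_coeff m \<alpha> = fact m / (\<Prod>k\<in>UNIV. fact (\<alpha> k))"

definition Psi :: "(real^'n::finite \<Rightarrow> real) \<Rightarrow> 'n fock" where
  "Psi f m xs = (if m = 0 then H_inner f f_inf
      else sqrt (fact m) * d_coeff f (multi_of xs) / gamma_coeff m (multi_of xs))"

definition dGamma :: "real^'n^'n \<Rightarrow> 'n::finite fock \<Rightarrow> 'n fock" where
  "dGamma C A m xs = (\<Sum>r<m. \<Sum>j\<in>UNIV. C $ (xs ! r) $ j * A m (xs[r := j]))"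

end

theory Submission
  imports Defs "HOL-Probability.Distributions" "HOL-Computational_Algebra.Polynomial"
begin

fun hp :: "nat \<Rightarrow> real poly" where
  "hp 0 = 1"
| "hp (Suc 0) = [:0, 1:]"
| "hp (Suc (Suc n)) = pCons 0 (hp (Suc n)) - smult (real (Suc n)) (hp n)"

lemma poly_hp: "poly (hp n) y = hermite n y"
  by (induction n rule: hp.induct) auto

lemma hp_Suc: "hp (Suc n) = pCons 0 (hp n) - smult (real n) (hp (n - 1))"
  by (cases n) auto

lemma hermite_Suc: "hermite (Suc n) y = y * hermite n y - real n * hermite (n - 1) y"
  by (cases n) auto

lemma pderiv_hp: "pderiv (hp n) = smult (real n) (hp (n - 1))"
proof (induction n rule: hp.induct)
  case 1 then show ?case by simp
next
  case 2 then show ?case by (simp add: pderiv_pCons)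
next
  case (3 n)
  have "pderiv (hp (Suc (Suc n))) = hp (Suc n) + pCons 0 (smult (real (Suc n)) (hp n))
         - smult (real (Suc n)) (smult (real n) (hp (n - 1)))"
    using 3 by (simp add: pderiv_pCons pderiv_diff pderiv_smult)
  also have "\<dots> = hp (Suc n) + smult (real (Suc n)) (pCons 0 (hp n) - smult (real n) (hp (n - 1)))"
    by (simp add: smult_diff_right smult_pCons[symmetric] del: of_nat_Suc)
  also have "\<dots> = hp (Suc n) + smult (real (Suc n)) (hp (Suc n))"
    by (simp only: hp_Suc[of n, symmetric])
  also have "\<dots> = smult (real (Suc (Suc n))) (hp (Suc n))"
  proof -
    have "real (Suc (Suc n)) = 1 + real (Suc n)" by simp
    then show ?thesis by (metis smult_add_left smult_1_left)
  qed
  finally show ?case by simp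
qed

lemma hp_deg_coeff: "degree (hp n) \<le> n \<and> coeff (hp n) n = 1"
proof (induction n rule: hp.induct)
  case (3 n)
  have "degree (pCons 0 (hp (Suc n))) \<le> Suc (Suc n)"
    using 3 by (metis Suc_le_mono degree_pCons_le le_trans)
  moreover have "degree (smult (real (Suc n)) (hp n)) \<le> Suc (Suc n)"
    using 3 by (meson degree_smult_le le_SucI order_trans)
  ultimately have "degree (hp (Suc (Suc n))) \<le> Suc (Suc n)"
    by (simp add: degree_diff_le)
  moreover have "coeff (smult (real (Suc n)) (hp n)) (Suc (Suc n)) = 0"
    using 3 by (simp add: coeff_eq_0)
  ultimately show ?case using 3 by simp
qed (auto simp: degree_pCons_eq_if)

definition E :: "real poly \<Rightarrow> real" where
  "E p = (\<integral>x. std_normal_density x * poly p x \<partial>lborel)"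

lemma poly_as_sum: "poly (p::real poly) x = (\<Sum>i\<le>degree p. coeff p i * x ^ i)"
  by (rule poly_altdef)

lemma integrable_E: "integrable lborel (\<lambda>x. std_normal_density x * poly p x)"
proof -
  have "(\<lambda>x. std_normal_density x * poly p x) = (\<lambda>x. \<Sum>i\<le>degree p. coeff p i * (std_normal_density x * x ^ i))"
    by (auto simp: poly_as_sum sum_distrib_left algebra_simps)
  moreover have "integrable lborel (\<lambda>x. \<Sum>i\<le>degree p. coeff p i * (std_normal_density x * x ^ i))"
    by (intro Bochner_Integration.integrable_sum Bochner_Integration.integrable_mult_right integrable_std_normal_moment)
  ultimately show ?thesis by simp
qed

definition M :: "nat \<Rightarrow> real" where
  "M k = (\<integral>x. std_normal_density x * x ^ k \<partial>lborel)"

lemma M_rec: "M (Suc (Suc k)) = real (Suc k) * M k"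
proof (cases "even k")
  case True
  then obtain j where k: "k = 2 * j" by (auto elim: evenE)
  have "M (Suc (Suc k)) = fact (2 * Suc j) / (2 ^ Suc j * fact (Suc j))"
    unfolding M_def using integral_std_normal_moment_even[of "Suc j"] k by simp
  also have "\<dots> = real (Suc k) * (fact (2 * j) / (2 ^ j * fact j))"
    by (simp add: k fact_Suc field_simps del: fact_Suc) (simp add: algebra_simps)
  also have "\<dots> = real (Suc k) * M k"
    unfolding M_def using integral_std_normal_moment_even[of j] k by simp
  finally show ?thesis .
next
  case False
  then obtain j where k: "k = 2 * j + 1" by (metis oddE)
  have "M (Suc (Suc k)) = 0" unfolding M_def using integral_std_normal_moment_odd[of "Suc j"] k by simp
  moreover have "M k = 0" unfolding M_def using integral_std_normal_moment_odd[of j] k by simp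
  ultimately show ?thesis by simp
qed

lemma M_1: "M (Suc 0) = 0"
  unfolding M_def using integral_std_normal_moment_odd[of 0] by simp

lemma E_sum: "E p = (\<Sum>i\<le>degree p. coeff p i * M i)"
proof -
  have "E p = (\<integral>x. (\<Sum>i\<le>degree p. coeff p i * (std_normal_density x * x ^ i)) \<partial>lborel)"
    unfolding E_def by (auto simp: poly_as_sum sum_distrib_left algebra_simps intro!: Bochner_Integration.integral_cong)
  also have "\<dots> = (\<Sum>i\<le>degree p. coeff p i * M i)"
    unfolding M_def
    by (subst Bochner_Integration.integral_sum) (auto intro: integrable_std_normal_moment)
  finally show ?thesis .
qed

lemma E_sum': "degree p \<le> n \<Longrightarrow> E p = (\<Sum>i\<le>n. coeff p i * M i)"
  unfolding E_sum by (intro sum.mono_neutral_left) (auto simp: coeff_eq_0)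

lemma E_add: "E (p + q) = E p + E q"
  unfolding E_def using integrable_E[of p] integrable_E[of q]
  by (simp add: distrib_left)

lemma E_diff: "E (p - q) = E p - E q"
  unfolding E_def using integrable_E[of p] integrable_E[of q]
  by (simp add: right_diff_distrib)

lemma E_smult: "E (smult a p) = a * E p"
  unfolding E_def by (simp add: algebra_simps)

lemma E_stein: "E (pCons 0 p) = E (pderiv p)"
proof -
  define n where "n = degree p"
  have "E (pCons 0 p) = (\<Sum>i\<le>Suc n. coeff (pCons 0 p) i * M i)"
    by (rule E_sum') (simp add: n_def degree_pCons_le)
  also have "\<dots> = (\<Sum>i\<le>n. coeff p i * M (Suc i))"
    by (subst sum.atMost_Suc_shift) simp
  also have "\<dots> = (\<Sum>i\<le>n. coeff (pderiv p) i * M i)"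
  proof -
    have "(\<Sum>i\<le>n. coeff p i * M (Suc i)) = (\<Sum>i\<le>Suc n. coeff p i * M (Suc i))"
      by (simp add: n_def coeff_eq_0)
    also have "\<dots> = coeff p 0 * M 1 + (\<Sum>i\<le>n. coeff p (Suc i) * M (Suc (Suc i)))"
      by (subst sum.atMost_Suc_shift) simp
    also have "\<dots> = (\<Sum>i\<le>n. coeff (pderiv p) i * M i)"
      by (simp add: M_1 M_rec coeff_pderiv algebra_simps del: of_nat_Suc)
    finally show ?thesis .
  qed
  also have "\<dots> = E (pderiv p)"
    by (rule E_sum'[symmetric]) (simp add: n_def degree_pderiv)
  finally show ?thesis .
qed

lemma E_hp_mult: "E (hp n * q) = E ((pderiv ^^ n) q)"
proof (induction n arbitrary: q)
  case 0 then show ?case by simp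
next
  case (Suc n)
  have "hp (Suc n) * q = pCons 0 (hp n * q) - pderiv (hp n) * q"
    by (simp add: hp_Suc pderiv_hp algebra_simps)
  then have "E (hp (Suc n) * q) = E (pderiv (hp n * q)) - E (pderiv (hp n) * q)"
    by (simp add: E_diff E_stein)
  also have "\<dots> = E (hp n * pderiv q)"
    by (simp add: pderiv_mult E_add mult.commute)
  also have "\<dots> = E ((pderiv ^^ Suc n) q)"
    using Suc by (simp add: funpow_Suc_right del: funpow.simps)
  finally show ?case .
qed

lemma pderiv_iter: "degree p \<le> n \<Longrightarrow> (pderiv ^^ n) p = [: fact n * coeff p n :]"
proof (induction n arbitrary: p)
  case 0 then show ?case by (auto elim: degree_eq_zeroE)
next
  case (Suc n)
  have "degree (pderiv p) \<le> n" using Suc.prems by (simp add: degree_pderiv)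
  then have "(pderiv ^^ Suc n) p = [: fact n * coeff (pderiv p) n :]"
    using Suc.IH by (simp add: funpow_Suc_right del: funpow.simps)
  then show ?case by (simp add: coeff_pderiv algebra_simps del: of_nat_Suc)
qed

lemma E_const: "E [:a:] = a"
  unfolding E_def using prob_space_normal_density
  by (simp add: integral_std_normal_moment_even[of 0, simplified])

lemma herm_orth_E: "E (hp m * hp n) = (if m = n then fact n else 0)"
proof -
  have key: "E (hp m * hp n) = (if m = n then fact n else 0)" if "n \<le> m" for m n
  proof -
    have "E (hp m * hp n) = E [: fact m * coeff (hp n) m :]"
      using hp_deg_coeff[of n] that by (simp add: E_hp_mult pderiv_iter)
    also have "coeff (hp n) m = (if m = n then 1 else 0)"
      using hp_deg_coeff[of n] that by (auto simp: coeff_eq_0)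
    finally show ?thesis by (simp add: E_const)
  qed
  show ?thesis
  proof (cases "n \<le> m")
    case True then show ?thesis by (rule key)
  next
    case False then show ?thesis using key[of m n] by (simp add: mult.commute)
  qed
qed

lemma gauss1_std: "gauss1 y = std_normal_density y"
  by (simp add: gauss1_def std_normal_density_def)

lemma herm_orth_int:
  "integrable lborel (\<lambda>y. hermite m y * hermite n y * gauss1 y)"
  "(\<integral>y. hermite m y * hermite n y * gauss1 y \<partial>lborel) = (if m = n then fact n else 0)"
proof -
  have eq: "(\<lambda>y. hermite m y * hermite n y * gauss1 y) = (\<lambda>y. std_normal_density y * poly (hp m * hp n) y)"
    by (auto simp: gauss1_std poly_hp)
  show "integrable lborel (\<lambda>y. hermite m y * hermite n y * gauss1 y)"
    unfolding eq by (rule integrable_E)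
  show "(\<integral>y. hermite m y * hermite n y * gauss1 y \<partial>lborel) = (if m = n then fact n else 0)"
    unfolding eq using herm_orth_E[of m n] by (simp add: E_def)
qed

lemma Basis_vec_axis: "(Basis :: (real^'n) set) = range (\<lambda>i. axis i 1)"
  by (auto simp: Basis_vec_def)

lemma lborel_prod_vec:
  fixes h :: "'n::finite \<Rightarrow> real \<Rightarrow> real"
  assumes int: "\<And>i. integrable lborel (h i)"
  shows "integrable lborel (\<lambda>x::real^'n. \<Prod>i\<in>UNIV. h i (x$i))"
    and "(\<integral>x. (\<Prod>i\<in>UNIV. h i (x$i)) \<partial>(lborel::(real^'n) measure)) = (\<Prod>i\<in>UNIV. integral\<^sup>L lborel (h i))"
proof -
  interpret product_sigma_finite "\<lambda>_. lborel" by standard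
  define H where "H b = h (axis_index b)" for b :: "real^'n"
  define T where "T f = (\<Sum>b\<in>Basis. f b *\<^sub>R b)" for f :: "real^'n \<Rightarrow> real"
  have inj: "inj (\<lambda>i::'n. axis i (1::real))" by (auto intro!: injI simp: axis_eq_axis)
  have eqf: "(\<lambda>x::real^'n. \<Prod>i\<in>UNIV. h i (x$i)) = (\<lambda>x. \<Prod>b\<in>Basis. H b (x \<bullet> b))"
    by (auto simp: Basis_vec_axis prod.reindex[OF inj] H_def cart_eq_inner_axis[symmetric])
  have eqI: "(\<Prod>i\<in>UNIV. integral\<^sup>L lborel (h i)) = (\<Prod>b\<in>(Basis::(real^'n) set). integral\<^sup>L lborel (H b))"
    by (auto simp: Basis_vec_axis prod.reindex[OF inj] H_def)
  have hm[measurable]: "H b \<in> borel_measurable borel" for b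
    unfolding H_def using borel_measurable_integrable[OF int[of "axis_index b"]] by simp
  have Tm[measurable]: "T \<in> measurable (\<Pi>\<^sub>M b\<in>Basis. lborel) borel"
    unfolding T_def by measurable
  have fm[measurable]: "(\<lambda>x::real^'n. \<Prod>b\<in>Basis. H b (x \<bullet> b)) \<in> borel_measurable borel"
    by measurable
  have Tb: "T f \<bullet> b = f b" if "b \<in> Basis" for f b
    using that unfolding T_def by (simp add: inner_sum_left inner_Basis if_distrib cong: if_cong)
  have l: "lborel = distr (\<Pi>\<^sub>M b\<in>(Basis::(real^'n) set). lborel) borel T"
    unfolding T_def by (rule lborel_eq)
  have pint: "integrable (\<Pi>\<^sub>M b\<in>(Basis::(real^'n) set). lborel) (\<lambda>f. \<Prod>b\<in>Basis. H b (f b))"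
    by (rule product_integrable_prod) (auto simp: H_def int)
  have pint': "integrable (\<Pi>\<^sub>M b\<in>(Basis::(real^'n) set). lborel) (\<lambda>f. \<Prod>b\<in>Basis. H b (T f \<bullet> b))"
    by (rule Bochner_Integration.integrable_cong[THEN iffD1, OF refl _ pint]) (simp add: Tb)
  show "integrable lborel (\<lambda>x::real^'n. \<Prod>i\<in>UNIV. h i (x$i))"
    unfolding eqf by (subst l, subst integrable_distr_eq) (use pint' in auto)
  have "(\<integral>x. (\<Prod>b\<in>Basis. H b (x \<bullet> b)) \<partial>(lborel::(real^'n) measure))
        = (\<integral>f. (\<Prod>b\<in>Basis. H b (T f \<bullet> b)) \<partial>(\<Pi>\<^sub>M b\<in>(Basis::(real^'n) set). lborel))"
    by (subst l, subst integral_distr) auto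
  also have "\<dots> = (\<integral>f. (\<Prod>b\<in>Basis. H b (f b)) \<partial>(\<Pi>\<^sub>M b\<in>(Basis::(real^'n) set). lborel))"
    by (rule Bochner_Integration.integral_cong) (auto simp: Tb)
  also have "\<dots> = (\<Prod>b\<in>(Basis::(real^'n) set). integral\<^sup>L lborel (H b))"
    by (rule product_integral_prod) (auto simp: H_def int)
  finally show "(\<integral>x. (\<Prod>i\<in>UNIV. h i (x$i)) \<partial>(lborel::(real^'n) measure)) = (\<Prod>i\<in>UNIV. integral\<^sup>L lborel (h i))"
    unfolding eqf eqI .
qed

lemma f_inf_prod: "f_inf (x::real^'n) = (\<Prod>i\<in>UNIV. gauss1 (x$i))"
proof -
  have n2: "norm x ^ 2 = (\<Sum>i\<in>UNIV. (x$i)^2)"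
    by (subst power2_norm_eq_inner) (simp add: inner_vec_def power2_eq_square)
  have "(\<Prod>i\<in>UNIV. gauss1 (x$i)) = (\<Prod>i\<in>UNIV. exp (- ((x$i)^2) / 2)) * (\<Prod>i\<in>(UNIV::'n set). inverse (sqrt (2*pi)))"
    by (simp only: gauss1_def divide_inverse prod.distrib)
  also have "(\<Prod>i\<in>(UNIV::'n set). inverse (sqrt (2*pi))) = inverse (sqrt (2*pi)) ^ CARD('n)"
    by (rule prod_constant)
  also have "(\<Prod>i\<in>UNIV. exp (- ((x$i)^2) / 2)) = exp (\<Sum>i\<in>UNIV. - ((x$i)^2) / 2)"
    by (rule exp_sum[symmetric]) simp
  also have "(\<Sum>i\<in>UNIV. - ((x$i)^2) / 2) = - (norm x ^ 2) / 2"
    unfolding n2 by (simp add: sum_negf sum_divide_distrib)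
  also have "inverse (sqrt (2*pi)) ^ CARD('n) = (2*pi) powr (- real CARD('n) / 2)"
  proof -
    have "sqrt (2*pi) ^ CARD('n) = ((2*pi) powr (1/2)) ^ CARD('n)" by (simp add: powr_half_sqrt)
    also have "\<dots> = (2*pi) powr (real CARD('n) * (1/2))" by (rule powr_power) simp
    finally have "sqrt (2*pi) ^ CARD('n) = (2*pi) powr (real CARD('n) / 2)" by simp
    moreover have "(2*pi) powr (- real CARD('n) / 2) = inverse ((2*pi) powr (real CARD('n)/2))"
      by (subst powr_minus[symmetric]) simp
    ultimately show ?thesis by (simp add: power_inverse)
  qed
  finally show ?thesis unfolding f_inf_def by (simp only: mult.commute)
qed

lemma gm_prod_div: "g_multi \<alpha> x * g_multi \<beta> x / f_inf x
   = (\<Prod>i\<in>UNIV. hermite (\<alpha> i) (x$i) * hermite (\<beta> i) (x$i) * gauss1 (x$i))"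
proof -
  have pos: "gauss1 y \<noteq> 0" for y by (simp add: gauss1_def)
  have pt: "a * g * (b * g) / g = a * b * g" if "g \<noteq> 0" for a b g :: real
    using that by (simp add: field_simps power2_eq_square)
  have "g_multi \<alpha> x * g_multi \<beta> x / f_inf x = (\<Prod>i\<in>UNIV. hermite (\<alpha> i) (x$i) * gauss1 (x$i) * (hermite (\<beta> i) (x$i) * gauss1 (x$i)) / gauss1 (x$i))"
    unfolding g_multi_def f_inf_prod prod.distrib[symmetric] prod_dividef[symmetric] ..
  also have "\<dots> = (\<Prod>i\<in>UNIV. hermite (\<alpha> i) (x$i) * hermite (\<beta> i) (x$i) * gauss1 (x$i))"
    by (rule prod.cong[OF refl]) (rule pt[OF pos])
  finally show ?thesis .
qed

definition NN :: "('n::finite \<Rightarrow> nat) \<Rightarrow> real" where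
  "NN \<beta> = (\<Prod>i\<in>UNIV. fact (\<beta> i))"

lemma gm_orth:
  "integrable lborel (\<lambda>x. g_multi \<alpha> x * g_multi \<beta> x / f_inf x)"
  "H_inner (g_multi \<alpha>) (g_multi \<beta>) = (if \<alpha> = \<beta> then NN \<beta> else 0)"
proof -
  show "integrable lborel (\<lambda>x. g_multi \<alpha> x * g_multi \<beta> x / f_inf x)"
    unfolding gm_prod_div by (rule lborel_prod_vec(1)) (rule herm_orth_int(1))
  have "H_inner (g_multi \<alpha>) (g_multi \<beta>) = (\<Prod>i\<in>UNIV. (if \<alpha> i = \<beta> i then fact (\<beta> i) else 0))"
    unfolding H_inner_def gm_prod_div
    by (subst lborel_prod_vec(2)) (auto intro: herm_orth_int simp: herm_orth_int(2))
  also have "\<dots> = (if \<alpha> = \<beta> then NN \<beta> else 0)"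
  proof (cases "\<alpha> = \<beta>")
    case False
    then obtain i where "\<alpha> i \<noteq> \<beta> i" by auto
    then show ?thesis proof -
      have "(\<Prod>i\<in>UNIV. if \<alpha> i = \<beta> i then fact (\<beta> i) else 0) = (0::real)"
        using \<open>\<alpha> i \<noteq> \<beta> i\<close> by (intro prod_zero) (auto intro!: bexI[of _ i])
      then show ?thesis using False by simp
    qed
  qed (simp add: NN_def)
  finally show "H_inner (g_multi \<alpha>) (g_multi \<beta>) = (if \<alpha> = \<beta> then NN \<beta> else 0)" .
qed

lemma NN_pos: "NN \<beta> > 0"
  unfolding NN_def by (rule prod_pos) simp

lemma f_inf_gm0: "f_inf = g_multi (\<lambda>_. 0)"
  by (rule ext) (simp add: f_inf_prod g_multi_def)

definition inc :: "'n \<Rightarrow> ('n \<Rightarrow> nat) \<Rightarrow> ('n \<Rightarrow> nat)" where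
  "inc i a = a(i := Suc (a i))"

definition dec :: "'n \<Rightarrow> ('n \<Rightarrow> nat) \<Rightarrow> ('n \<Rightarrow> nat)" where
  "dec i a = a(i := a i - 1)"

lemma gauss1_deriv: "(gauss1 has_real_derivative (- y * gauss1 y)) (at y)"
  unfolding gauss1_def
  by (auto intro!: derivative_eq_intros simp: field_simps power2_eq_square)

lemma hermite_deriv: "((\<lambda>y. hermite n y) has_real_derivative (real n * hermite (n - 1) y)) (at y)"
proof -
  have "((\<lambda>y. poly (hp n) y) has_real_derivative poly (pderiv (hp n)) y) (at y)" by (rule poly_DERIV)
  then show ?thesis by (simp add: poly_hp pderiv_hp)
qed

lemma phi_deriv: "((\<lambda>y. hermite n y * gauss1 y) has_real_derivative - (hermite (Suc n) y * gauss1 y)) (at y)"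
proof -
  have "((\<lambda>y. hermite n y * gauss1 y) has_real_derivative
          (real n * hermite (n - 1) y) * gauss1 y + (- y * gauss1 y) * hermite n y) (at y)"
    by (rule DERIV_mult[OF hermite_deriv gauss1_deriv])
  also have "(real n * hermite (n - 1) y) * gauss1 y + (- y * gauss1 y) * hermite n y
     = - (hermite (Suc n) y * gauss1 y)"
    by (simp add: hermite_Suc algebra_simps)
  finally show ?thesis .
qed

lemma gm_split: "g_multi a x = hermite (a i) (x$i) * gauss1 (x$i) *
   (\<Prod>k\<in>UNIV - {i}. hermite (a k) (x$k) * gauss1 (x$k))"
  unfolding g_multi_def by (subst prod.remove[of UNIV i]) auto

lemma gm_deriv: "((\<lambda>t. g_multi a (x + t *\<^sub>R axis i 1)) has_real_derivative - g_multi (inc i a) x) (at 0)"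
proof -
  define K where "K = (\<Prod>k\<in>UNIV - {i}. hermite (a k) (x$k) * gauss1 (x$k))"
  have eq: "g_multi a (x + t *\<^sub>R axis i 1) = hermite (a i) (x$i + t) * gauss1 (x$i + t) * K" for t
    unfolding K_def by (subst gm_split[of _ _ i]) (auto simp: axis_def intro!: prod.cong)
  have eq2: "g_multi (inc i a) x = hermite (Suc (a i)) (x$i) * gauss1 (x$i) * K"
    unfolding K_def by (subst gm_split[of _ _ i]) (auto simp: inc_def intro!: prod.cong)
  have d1: "((\<lambda>t. x$i + t) has_real_derivative 1) (at 0)"
    by (auto intro!: derivative_eq_intros)
  have "((\<lambda>t. hermite (a i) (x$i + t) * gauss1 (x$i + t)) has_real_derivative
          - (hermite (Suc (a i)) (x$i) * gauss1 (x$i))) (at 0)"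
    using DERIV_chain'[OF d1 phi_deriv[of "a i" "x$i + 0"]] by simp
  then have "((\<lambda>t. hermite (a i) (x$i + t) * gauss1 (x$i + t) * K) has_real_derivative
          - (hermite (Suc (a i)) (x$i) * gauss1 (x$i)) * K) (at 0)"
    by (rule DERIV_cmult_right)
  then show ?thesis unfolding eq eq2 by simp
qed

lemma comb_deriv:
  "((\<lambda>t. \<Sum>a\<in>A. w a * g_multi (\<gamma> a) (x + t *\<^sub>R axis i 1)) has_real_derivative
      (\<Sum>a\<in>A. w a * - g_multi (inc i (\<gamma> a)) x)) (at 0)"
  by (intro DERIV_sum DERIV_cmult gm_deriv)

lemma partial_comb:
  "partial i (\<lambda>y. \<Sum>a\<in>A. w a * g_multi (\<gamma> a) y) x = (\<Sum>a\<in>A. w a * - g_multi (inc i (\<gamma> a)) x)"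
  unfolding partial_def by (rule DERIV_imp_deriv[OF comb_deriv])

lemma inc_comm: "inc i (inc j a) = inc j (inc i a)"
  by (auto simp: inc_def fun_eq_iff)

lemma dec_inc_same: "dec i (inc i a) = a"
  by (auto simp: inc_def dec_def fun_eq_iff)

lemma inc_apply: "inc i a j = a j + (if j = i then 1 else 0)"
  by (auto simp: inc_def)

lemma xg: "x$j * g_multi a x = g_multi (inc j a) x + real (a j) * g_multi (dec j a) x"
proof -
  define K where "K = (\<Prod>k\<in>UNIV - {j}. hermite (a k) (x$k) * gauss1 (x$k))"
  have e1: "g_multi a x = hermite (a j) (x$j) * gauss1 (x$j) * K"
    unfolding K_def by (rule gm_split)
  have e2: "g_multi (inc j a) x = hermite (Suc (a j)) (x$j) * gauss1 (x$j) * K"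
    unfolding K_def by (subst gm_split[of _ _ j]) (auto simp: inc_def intro!: prod.cong)
  have e3: "g_multi (dec j a) x = hermite (a j - 1) (x$j) * gauss1 (x$j) * K"
    unfolding K_def by (subst gm_split[of _ _ j]) (auto simp: dec_def intro!: prod.cong)
  show ?thesis unfolding e1 e2 e3 by (simp add: hermite_Suc algebra_simps)
qed

lemma sym_part_comp: "sym_part C $ i $ j = (C$i$j + C$j$i) / 2"
  by (simp add: sym_part_def transpose_def)

lemma per_alpha:
  fixes C :: "real^'n^'n" and x :: "real^'n"
  shows "- (\<Sum>i\<in>UNIV. (\<Sum>j\<in>UNIV. sym_part C $ i $ j * g_multi (inc i (inc j a)) x)
            + C$i$i * g_multi a x - (\<Sum>j\<in>UNIV. C$i$j * x$j) * g_multi (inc i a) x)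
       = (\<Sum>i\<in>UNIV. \<Sum>j\<in>UNIV. C$i$j * real (a j) * g_multi (dec j (inc i a)) x)"
proof -
  let ?G = "\<lambda>b. g_multi b x"
  have S1: "(\<Sum>i\<in>UNIV. \<Sum>j\<in>UNIV. sym_part C $ i $ j * ?G (inc i (inc j a)))
          = (\<Sum>i\<in>UNIV. \<Sum>j\<in>UNIV. C$i$j * ?G (inc j (inc i a)))"
  proof -
    have "(\<Sum>i\<in>UNIV. \<Sum>j\<in>UNIV. sym_part C $ i $ j * ?G (inc i (inc j a)))
        = (1/2) * (\<Sum>i\<in>UNIV. \<Sum>j\<in>UNIV. C$i$j * ?G (inc j (inc i a)))
          + (1/2) * (\<Sum>i\<in>UNIV. \<Sum>j\<in>UNIV. C$j$i * ?G (inc j (inc i a)))"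
      by (simp add: sym_part_comp sum_distrib_left sum.distrib[symmetric] inc_comm algebra_simps add_divide_distrib)
    also have "(\<Sum>i\<in>UNIV. \<Sum>j\<in>UNIV. C$j$i * ?G (inc j (inc i a)))
             = (\<Sum>i\<in>UNIV. \<Sum>j\<in>UNIV. C$i$j * ?G (inc j (inc i a)))"
      by (subst sum.swap) (simp add: inc_comm)
    finally show ?thesis by simp
  qed
  have S2: "(\<Sum>j\<in>UNIV. C$i$j * x$j) * ?G (inc i a)
       = (\<Sum>j\<in>UNIV. C$i$j * ?G (inc j (inc i a))) + (\<Sum>j\<in>UNIV. C$i$j * real (a j) * ?G (dec j (inc i a)))
         + C$i$i * ?G a" for i
  proof -
    have "(\<Sum>j\<in>UNIV. C$i$j * x$j) * ?G (inc i a) = (\<Sum>j\<in>UNIV. C$i$j * (x$j * ?G (inc i a)))"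
      by (simp add: sum_distrib_right mult.assoc)
    also have "\<dots> = (\<Sum>j\<in>UNIV. C$i$j * ?G (inc j (inc i a)) + C$i$j * real (a j) * ?G (dec j (inc i a))
                 + (if j = i then C$i$j * ?G (dec j (inc i a)) else 0))"
      by (rule sum.cong[OF refl]) (simp add: xg inc_apply algebra_simps)
    also have "\<dots> = (\<Sum>j\<in>UNIV. C$i$j * ?G (inc j (inc i a))) + (\<Sum>j\<in>UNIV. C$i$j * real (a j) * ?G (dec j (inc i a)))
         + C$i$i * ?G a"
      by (simp add: sum.distrib dec_inc_same)
    finally show ?thesis .
  qed
  show ?thesis
    by (simp add: S2 sum.distrib S1 sum_subtractf)
qed

lemma FP_formula:
  fixes C :: "real^'n^'n" and x :: "real^'n"
  assumes f: "f = (\<lambda>x. \<Sum>\<alpha>\<in>S. c \<alpha> * g_multi \<alpha> x)"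
  shows "FP_op C f x = (\<Sum>\<alpha>\<in>S. c \<alpha> * (\<Sum>i\<in>UNIV. \<Sum>j\<in>UNIV. C$i$j * real (\<alpha> j) * g_multi (dec j (inc i \<alpha>)) x))"
proof -
  have pf: "partial j f = (\<lambda>y. \<Sum>\<alpha>\<in>S. (- c \<alpha>) * g_multi (inc j \<alpha>) y)" for j
  proof
    fix y
    show "partial j f y = (\<Sum>\<alpha>\<in>S. (- c \<alpha>) * g_multi (inc j \<alpha>) y)"
      unfolding f using partial_comb[where \<gamma>="\<lambda>a. a" and w=c and A=S and i=j and x=y] by simp
  qed
  define D where "D i = (\<Sum>j\<in>UNIV. sym_part C $ i $ j * (\<Sum>\<alpha>\<in>S. (- c \<alpha>) * - g_multi (inc i (inc j \<alpha>)) x))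
      + (C$i$i * f x + (\<Sum>\<alpha>\<in>S. c \<alpha> * - g_multi (inc i \<alpha>) x) * (\<Sum>j\<in>UNIV. C$i$j * x$j))" for i
  have pd: "partial i (\<lambda>y. (\<Sum>j\<in>UNIV. sym_part C $ i $ j * partial j f y) + (\<Sum>j\<in>UNIV. C $ i $ j * y $ j) * f y) x = D i" for i
  proof -
    have d1: "((\<lambda>t. \<Sum>j\<in>UNIV. sym_part C $ i $ j * partial j f (x + t *\<^sub>R axis i 1)) has_real_derivative
        (\<Sum>j\<in>UNIV. sym_part C $ i $ j * (\<Sum>\<alpha>\<in>S. (- c \<alpha>) * - g_multi (inc i (inc j \<alpha>)) x))) (at 0)"
      unfolding pf by (intro DERIV_sum DERIV_cmult comb_deriv)
    have lin: "(\<Sum>j\<in>UNIV. C$i$j * (x + t *\<^sub>R axis i 1)$j) = (\<Sum>j\<in>UNIV. C$i$j * x$j) + t * C$i$i" for t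
    proof -
      have "(\<Sum>j\<in>UNIV. C$i$j * (x + t *\<^sub>R axis i 1)$j) = (\<Sum>j\<in>UNIV. C$i$j * x$j + (if j = i then t * C$i$i else 0))"
        by (rule sum.cong) (auto simp: axis_def algebra_simps)
      then show ?thesis by (simp add: sum.distrib)
    qed
    have d2: "((\<lambda>t. \<Sum>j\<in>UNIV. C$i$j * (x + t *\<^sub>R axis i 1)$j) has_real_derivative C$i$i) (at 0)"
      unfolding lin by (auto intro!: derivative_eq_intros)
    have d3: "((\<lambda>t. f (x + t *\<^sub>R axis i 1)) has_real_derivative (\<Sum>\<alpha>\<in>S. c \<alpha> * - g_multi (inc i \<alpha>) x)) (at 0)"
      unfolding f using comb_deriv[where \<gamma>="\<lambda>a. a" and w=c and A=S and i=i and x=x] by simp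
    have "((\<lambda>t. (\<Sum>j\<in>UNIV. sym_part C $ i $ j * partial j f (x + t *\<^sub>R axis i 1))
             + (\<Sum>j\<in>UNIV. C$i$j * (x + t *\<^sub>R axis i 1)$j) * f (x + t *\<^sub>R axis i 1)) has_real_derivative D i) (at 0)"
      using DERIV_add[OF d1 DERIV_mult[OF d2 d3]] unfolding D_def by simp
    then show ?thesis unfolding partial_def by (rule DERIV_imp_deriv)
  qed
  have "FP_op C f x = - (\<Sum>i\<in>UNIV. D i)"
    unfolding FP_op_def pd ..
  also have "\<dots> = (\<Sum>\<alpha>\<in>S. c \<alpha> * (- (\<Sum>i\<in>UNIV. (\<Sum>j\<in>UNIV. sym_part C $ i $ j * g_multi (inc i (inc j \<alpha>)) x)
            + C$i$i * g_multi \<alpha> x - (\<Sum>j\<in>UNIV. C$i$j * x$j) * g_multi (inc i \<alpha>) x)))"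
    unfolding D_def f
    apply (simp add: sum_distrib_left sum_distrib_right sum.distrib sum_subtractf sum_negf algebra_simps)
    apply (subst (1 2) sum.swap[of _ S])
    apply (subst (2) sum.swap[of _ UNIV S])
    apply (simp add: sum.swap[of _ UNIV S])
    done
  also have "\<dots> = (\<Sum>\<alpha>\<in>S. c \<alpha> * (\<Sum>i\<in>UNIV. \<Sum>j\<in>UNIV. C$i$j * real (\<alpha> j) * g_multi (dec j (inc i \<alpha>)) x))"
    by (simp only: per_alpha)
  finally show ?thesis .
qed

lemma H_comb:
  "H_inner (\<lambda>x. \<Sum>a\<in>A. w a * g_multi (\<gamma> a) x) (g_multi \<beta>)
     = (\<Sum>a\<in>A. w a * H_inner (g_multi (\<gamma> a)) (g_multi \<beta>))"
proof -
  have "H_inner (\<lambda>x. \<Sum>a\<in>A. w a * g_multi (\<gamma> a) x) (g_multi \<beta>)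
      = (\<integral>x. (\<Sum>a\<in>A. w a * (g_multi (\<gamma> a) x * g_multi \<beta> x / f_inf x)) \<partial>lborel)"
    unfolding H_inner_def
    by (rule Bochner_Integration.integral_cong[OF refl])
       (simp add: sum_distrib_right sum_divide_distrib mult.assoc)
  also have "\<dots> = (\<Sum>a\<in>A. (\<integral>x. w a * (g_multi (\<gamma> a) x * g_multi \<beta> x / f_inf x) \<partial>lborel))"
    by (rule Bochner_Integration.integral_sum) (intro Bochner_Integration.integrable_mult_right gm_orth(1))
  also have "\<dots> = (\<Sum>a\<in>A. w a * H_inner (g_multi (\<gamma> a)) (g_multi \<beta>))"
    by (simp only: integral_mult_right_zero H_inner_def)
  finally show ?thesis .
qed

lemma key_equiv:
  assumes aj: "a j \<noteq> 0"
  shows "dec j (inc i a) = b \<longleftrightarrow> (0 < b i \<and> a = dec i (inc j b))"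
proof (cases "i = j")
  case True
  then show ?thesis using aj by (auto simp: dec_inc_same)
next
  case False
  show ?thesis
  proof
    assume h: "dec j (inc i a) = b"
    have bi: "b i = Suc (a i)" "b j = a j - 1" "\<And>k. k \<noteq> i \<Longrightarrow> k \<noteq> j \<Longrightarrow> b k = a k"
      unfolding h[symmetric] using False by (auto simp: dec_def inc_def)
    show "0 < b i \<and> a = dec i (inc j b)"
      using bi False aj by (auto simp: dec_def inc_def fun_eq_iff)
  next
    assume h: "0 < b i \<and> a = dec i (inc j b)"
    have ai: "a i = b i - 1" "a j = Suc (b j)" "\<And>k. k \<noteq> i \<Longrightarrow> k \<noteq> j \<Longrightarrow> a k = b k"
      using h False by (auto simp: dec_def inc_def)
    show "dec j (inc i a) = b"
      using ai False h by (auto simp: dec_def inc_def fun_eq_iff)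
  qed
qed

definition cc :: "('n \<Rightarrow> nat) set \<Rightarrow> (('n \<Rightarrow> nat) \<Rightarrow> real) \<Rightarrow> ('n \<Rightarrow> nat) \<Rightarrow> real" where
  "cc S c g = (if g \<in> S then c g else 0)"

lemma comb_sum:
  assumes "finite S"
  shows "(\<Sum>\<alpha>\<in>S. c \<alpha> * real (\<alpha> j) * (if dec j (inc i \<alpha>) = \<beta> then 1 else 0))
    = (if 0 < \<beta> i then cc S c (dec i (inc j \<beta>)) * real (dec i (inc j \<beta>) j) else 0)"
proof -
  let ?U = "dec i (inc j \<beta>)"
  have "(\<Sum>\<alpha>\<in>S. c \<alpha> * real (\<alpha> j) * (if dec j (inc i \<alpha>) = \<beta> then 1 else 0))
      = (\<Sum>\<alpha>\<in>S. if \<alpha> = ?U then (if 0 < \<beta> i then c \<alpha> * real (\<alpha> j) else 0) else 0)"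
  proof (rule sum.cong[OF refl])
    fix \<alpha> assume "\<alpha> \<in> S"
    show "c \<alpha> * real (\<alpha> j) * (if dec j (inc i \<alpha>) = \<beta> then 1 else 0)
        = (if \<alpha> = ?U then (if 0 < \<beta> i then c \<alpha> * real (\<alpha> j) else 0) else 0)"
    proof (cases "\<alpha> j = 0")
      case True then show ?thesis by auto
    next
      case False
      show ?thesis using key_equiv[where a=\<alpha> and j=j and i=i and b=\<beta>] False by auto
    qed
  qed
  also have "\<dots> = (if ?U \<in> S then (if 0 < \<beta> i then c ?U * real (?U j) else 0) else 0)"
    by (rule sum.delta[OF assms])
  also have "\<dots> = (if 0 < \<beta> i then cc S c ?U * real (?U j) else 0)"
    by (simp add: cc_def)
  finally show ?thesis .
qed

lemma HFP:
  fixes C :: "real^'n^'n"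
  assumes f: "f = (\<lambda>x. \<Sum>\<alpha>\<in>S. c \<alpha> * g_multi \<alpha> x)" and fin: "finite S"
  shows "H_inner (FP_op C f) (g_multi \<beta>) = NN \<beta> *
     (\<Sum>i\<in>UNIV. \<Sum>j\<in>UNIV. C$i$j * (if 0 < \<beta> i then cc S c (dec i (inc j \<beta>)) * real (dec i (inc j \<beta>) j) else 0))"
proof -
  define w where "w = (\<lambda>(\<alpha>::'n\<Rightarrow>nat, i::'n, j::'n). c \<alpha> * C$i$j * real (\<alpha> j))"
  define \<gamma> where "\<gamma> = (\<lambda>(\<alpha>::'n\<Rightarrow>nat, i::'n, j::'n). dec j (inc i \<alpha>))"
  have nest: "(\<Sum>p\<in>S \<times> UNIV \<times> UNIV. F p) = (\<Sum>\<alpha>\<in>S. \<Sum>i\<in>UNIV. \<Sum>j\<in>UNIV. F (\<alpha>, i, j))" for F :: "('n\<Rightarrow>nat) \<times> 'n \<times> 'n \<Rightarrow> real"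
    by (simp add: sum.cartesian_product)
  have "FP_op C f = (\<lambda>x. \<Sum>p\<in>S \<times> UNIV \<times> UNIV. w p * g_multi (\<gamma> p) x)"
  proof
    fix x
    show "FP_op C f x = (\<Sum>p\<in>S \<times> UNIV \<times> UNIV. w p * g_multi (\<gamma> p) x)"
      unfolding FP_formula[OF f] nest w_def \<gamma>_def by (simp add: sum_distrib_left mult.assoc)
  qed
  then have "H_inner (FP_op C f) (g_multi \<beta>) = (\<Sum>p\<in>S \<times> UNIV \<times> UNIV. w p * H_inner (g_multi (\<gamma> p)) (g_multi \<beta>))"
    by (simp add: H_comb)
  also have "\<dots> = (\<Sum>\<alpha>\<in>S. \<Sum>i\<in>UNIV. \<Sum>j\<in>UNIV. NN \<beta> * C$i$j * (c \<alpha> * real (\<alpha> j) * (if dec j (inc i \<alpha>) = \<beta> then 1 else 0)))"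
    unfolding nest w_def \<gamma>_def by (auto simp: gm_orth(2) intro!: sum.cong)
  also have "\<dots> = (\<Sum>i\<in>UNIV. \<Sum>j\<in>UNIV. NN \<beta> * C$i$j * (\<Sum>\<alpha>\<in>S. c \<alpha> * real (\<alpha> j) * (if dec j (inc i \<alpha>) = \<beta> then 1 else 0)))"
    by (subst sum.swap) (simp add: sum.swap[of _ S] sum_distrib_left)
  also have "\<dots> = NN \<beta> *
     (\<Sum>i\<in>UNIV. \<Sum>j\<in>UNIV. C$i$j * (if 0 < \<beta> i then cc S c (dec i (inc j \<beta>)) * real (dec i (inc j \<beta>) j) else 0))"
    by (simp only: comb_sum[OF fin]) (simp add: sum_distrib_left mult.assoc)
  finally show ?thesis .
qed

lemma H_f:
  assumes f: "f = (\<lambda>x. \<Sum>\<alpha>\<in>S. c \<alpha> * g_multi \<alpha> x)" and fin: "finite S"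
  shows "d_coeff f \<beta> = cc S c \<beta>"
proof -
  have "H_inner f (g_multi \<beta>) = (\<Sum>\<alpha>\<in>S. c \<alpha> * (if \<alpha> = \<beta> then NN \<beta> else 0))"
    unfolding f by (simp add: H_comb[where \<gamma>="\<lambda>a. a", simplified] gm_orth(2))
  also have "\<dots> = (\<Sum>\<alpha>\<in>S. if \<alpha> = \<beta> then c \<beta> * NN \<beta> else 0)"
    by (rule sum.cong) auto
  also have "\<dots> = cc S c \<beta> * NN \<beta>"
    unfolding sum.delta[OF fin] by (simp add: cc_def)
  finally show ?thesis
    unfolding d_coeff_def gm_orth(2) using NN_pos[of \<beta>] by simp
qed

lemma mo_upd:
  assumes "r < length xs"
  shows "multi_of (xs[r := j]) = dec (xs!r) (inc j (multi_of xs))"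
proof
  fix k
  have pos: "0 < count (mset xs) (xs!r)" using assms by simp
  show "multi_of (xs[r := j]) k = dec (xs!r) (inc j (multi_of xs)) k"
    unfolding multi_of_def mset_update[OF assms] using pos
    by (auto simp: dec_def inc_def)
qed

lemma pos_sum:
  fixes F :: "'n::finite \<Rightarrow> real"
  shows "(\<Sum>r<length xs. F (xs!r)) = (\<Sum>i\<in>UNIV. real (multi_of xs i) * F i)"
proof (induction xs)
  case Nil then show ?case by (simp add: multi_of_def)
next
  case (Cons a ys)
  have "(\<Sum>r<length (a # ys). F ((a # ys)!r)) = F a + (\<Sum>r<length ys. F (ys!r))"
    by (simp only: length_Cons sum.lessThan_Suc_shift nth_Cons_0 nth_Cons_Suc)
  also have "\<dots> = (\<Sum>i\<in>UNIV. (if i = a then F i else 0)) + (\<Sum>i\<in>UNIV. real (multi_of ys i) * F i)"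
    using Cons by simp
  also have "\<dots> = (\<Sum>i\<in>UNIV. real (multi_of (a # ys) i) * F i)"
    by (simp only: sum.distrib[symmetric]) (rule sum.cong, auto simp: multi_of_def algebra_simps)
  finally show ?case .
qed

lemma NN_ratio:
  assumes "0 < \<beta> i"
  shows "NN \<beta> * real (dec i (inc j \<beta>) j) = real (\<beta> i) * NN (dec i (inc j \<beta>))"
proof (cases "i = j")
  case True then show ?thesis by (simp add: dec_inc_same)
next
  case False
  have split: "NN g = fact (g i) * (fact (g j) * (\<Prod>k\<in>UNIV - {i} - {j}. fact (g k)))" for g
  proof -
    have 1: "(\<Prod>k\<in>UNIV. (fact (g k)::real)) = fact (g i) * (\<Prod>k\<in>UNIV-{i}. fact (g k))"
      by (rule prod.remove) auto
    have 2: "(\<Prod>k\<in>UNIV-{i}. (fact (g k)::real)) = fact (g j) * (\<Prod>k\<in>UNIV-{i}-{j}. fact (g k))"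
      by (rule prod.remove) (use False in auto)
    show ?thesis unfolding NN_def 1 2 ..
  qed
  have P: "(\<Prod>k\<in>UNIV - {i} - {j}. fact (dec i (inc j \<beta>) k)) = (\<Prod>k\<in>UNIV - {i} - {j}. (fact (\<beta> k) :: real))"
    by (rule prod.cong) (auto simp: dec_def inc_def)
  have Ui: "dec i (inc j \<beta>) i = \<beta> i - 1" and Uj: "dec i (inc j \<beta>) j = Suc (\<beta> j)"
    using False by (auto simp: dec_def inc_def)
  have fi: "(fact (\<beta> i) :: real) = real (\<beta> i) * fact (\<beta> i - 1)"
  proof -
    obtain n where n: "\<beta> i = Suc n" using assms by (cases "\<beta> i") auto
    show ?thesis by (simp add: n)
  qed
  show ?thesis
    unfolding split[of \<beta>] split[of "dec i (inc j \<beta>)"] P Ui Uj fi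
    by (simp add: algebra_simps)
qed

theorem proposition7p5:
  fixes C :: "real^'n^'n" and S :: "('n \<Rightarrow> nat) set" and c :: "('n \<Rightarrow> nat) \<Rightarrow> real"
    and f :: "real^'n \<Rightarrow> real"
  assumes "condition_A C"
    and "finite S"
    and "f = (\<lambda>x. \<Sum>\<alpha>\<in>S. c \<alpha> * g_multi \<alpha> x)"
  shows "\<forall>m xs. length xs = m \<longrightarrow> Psi (FP_op C f) m xs = dGamma C (Psi f) m xs"
proof (intro allI impI)
  fix m and xs :: "'n list"
  assume len: "length xs = m"
  note fin = assms(2) and f = assms(3)
  define \<beta> where "\<beta> = multi_of xs"
  define U where "U i j = dec i (inc j \<beta>)" for i j
  define X where "X = (\<Sum>i\<in>UNIV. \<Sum>j\<in>UNIV. C$i$j * (if 0 < \<beta> i then cc S c (U i j) * real (U i j j) else 0))"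
  have HF: "H_inner (FP_op C f) (g_multi \<beta>) = NN \<beta> * X"
    unfolding X_def U_def by (rule HFP[OF f fin])
  show "Psi (FP_op C f) m xs = dGamma C (Psi f) m xs"
  proof (cases "m = 0")
    case True
    then have xs: "xs = []" using len by simp
    have b0: "\<beta> = (\<lambda>_. 0)" unfolding \<beta>_def xs by (simp add: multi_of_def)
    have "Psi (FP_op C f) m xs = NN \<beta> * X"
      unfolding Psi_def using True HF by (simp add: f_inf_gm0 b0)
    also have "X = 0" unfolding X_def b0 by simp
    finally show ?thesis using True by (simp add: dGamma_def)
  next
    case False
    have gam: "gamma_coeff m g = fact m / NN g" for g :: "'n \<Rightarrow> nat"
      by (simp add: gamma_coeff_def NN_def)
    have fm: "(fact m :: real) > 0" by simp
    have NNp: "NN g > 0" for g :: "'n \<Rightarrow> nat" by (rule NN_pos)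
    have "Psi (FP_op C f) m xs = sqrt (fact m) * X / (fact m / NN \<beta>)"
      unfolding Psi_def d_coeff_def using False HF NNp[of \<beta>]
      by (simp add: \<beta>_def[symmetric] gam gm_orth(2))
    also have "\<dots> = sqrt (fact m) / fact m * (NN \<beta> * X)"
      using NNp[of \<beta>] fm by (simp add: field_simps)
    finally have L: "Psi (FP_op C f) m xs = sqrt (fact m) / fact m * (NN \<beta> * X)" .
    define F where "F i = (\<Sum>j\<in>UNIV. C$i$j * (cc S c (U i j) * NN (U i j)))" for i
    have "dGamma C (Psi f) m xs = (\<Sum>r<m. \<Sum>j\<in>UNIV. C $ (xs!r) $ j * (sqrt (fact m) * cc S c (U (xs!r) j) / (fact m / NN (U (xs!r) j))))"
      unfolding dGamma_def Psi_def using False len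
      by (intro sum.cong refl) (simp add: H_f[OF f fin] gam mo_upd U_def \<beta>_def)
    also have "\<dots> = sqrt (fact m) / fact m * (\<Sum>r<length xs. F (xs!r))"
      unfolding F_def len using fm NNp
      by (simp add: sum_distrib_left field_simps)
    also have "(\<Sum>r<length xs. F (xs!r)) = (\<Sum>i\<in>UNIV. real (\<beta> i) * F i)"
      unfolding \<beta>_def by (rule pos_sum)
    also have "\<dots> = NN \<beta> * X"
      unfolding X_def F_def sum_distrib_left
    proof (intro sum.cong refl)
      fix i j
      show "real (\<beta> i) * (C$i$j * (cc S c (U i j) * NN (U i j)))
          = NN \<beta> * (C$i$j * (if 0 < \<beta> i then cc S c (U i j) * real (U i j j) else 0))"
      proof (cases "0 < \<beta> i")
        case True
        then have "NN \<beta> * real (U i j j) = real (\<beta> i) * NN (U i j)"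
          unfolding U_def by (rule NN_ratio)
        then show ?thesis using True
          by (simp add: algebra_simps)
      qed simp
    qed
    finally show ?thesis using L by simp
  qed
qed

end
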